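(* Let $A$ be an algebra in a semidegenerate congruence modular variety such that $K(A)$ is closed under the commutator. If the map $B(Con(A))\rightarrow Clop(Spec(A))$, $\alpha\mapsto D_A(\alpha)$, is a Boolean isomorphism, then the reticulation of $A$ preserves the Boolean center.
   Context: $\mathcal{V}$ is a congruence modular, semidegenerate variety (no nontrivial algebra has a one-element subalgebra; equivalently $\nabla_A$ is compact) of finite signature; $A\in\mathcal{V}$. $Con(A)$ is the congruence lattice with bounds $\Delta_A,\nabla_A$, $[\cdot,\cdot]$ the Freese–McKenzie commutator, $K(A)$ the compact congruences. A congruence $\phi\neq\nabla_A$ is prime if $[\alpha,\beta]\subseteq\phi$ implies $\alpha\subseteq\phi$ or $\beta\subseteq\phi$; $Spec(A)$ is the set of primes; $\rho(\theta)$ is the intersection of primes containing $\theta$; $V_A(\theta)=\{\phi\in Spec(A):\theta\subseteq\phi\}$, $D_A(\theta)=Spec(A)\setminus V_A(\theta)$, and the sets $D_A(\theta)$ form the topology on $Spec(A)$. $Clop(X)$ is the Boolean algebra of clopen subsets of $X$. $B(Con(A))$ is the Boolean algebra of complemented elements of $Con(A)$; for $\alpha\in B(Con(A))$, $D_A(\alpha)$ is clopen. The reticulation $L(A)=K(A)/{\equiv}$ ($\alpha\equiv\beta$ iff $\rho(\alpha)=\rho(\beta)$) is a bounded distributive lattice with canonical map $\lambda_A:K(A)\to L(A)$, which maps $B(Con(A))$ injectively into $B(L(A))$ (complemented elements of $L(A)$). The reticulation of $A$ preserves the Boolean center if $\lambda_A|_{B(Con(A))}:B(Con(A))\to B(L(A))$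 is surjective. *)

theory Defs
  imports Main
begin

text \<open>A signature is a type of operation symbols 'f together with an arity
function ar. An algebra of that signature is a carrier set together with an
interpretation of every operation symbol (only its values on argument lists of
the right length inside the carrier matter).\<close>

record ('a, 'f) alg =
  alg_carrier :: "'a set"
  alg_op :: "'f \<Rightarrow> 'a list \<Rightarrow> 'a"

definition is_algebra :: "('f \<Rightarrow> nat) \<Rightarrow> ('a, 'f) alg \<Rightarrow> bool" where
  "is_algebra ar A \<longleftrightarrow> alg_carrier A \<noteq> {} \<and>
     (\<forall>f xs. length xs = ar f \<and> set xs \<subseteq> alg_carrier A \<longrightarrow> alg_op A f xs \<in> alg_carrier A)"

datatype ('f, 'v) trm = Var 'v | Fn 'f "('f, 'v) trm list"

fun wf_trm :: "('f \<Rightarrow> nat) \<Rightarrow> ('f, 'v) trm \<Rightarrow> bool" where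
  "wf_trm ar (Var x) = True"
| "wf_trm ar (Fn f ts) = (length ts = ar f \<and> (\<forall>t\<in>set ts. wf_trm ar t))"

fun eval_trm :: "('a, 'f) alg \<Rightarrow> ('v \<Rightarrow> 'a) \<Rightarrow> ('f, 'v) trm \<Rightarrow> 'a" where
  "eval_trm A v (Var x) = v x"
| "eval_trm A v (Fn f ts) = alg_op A f (map (eval_trm A v) ts)"

definition satisfies :: "('a, 'f) alg \<Rightarrow> ('f, nat) trm \<times> ('f, nat) trm \<Rightarrow> bool" where
  "satisfies A e \<longleftrightarrow> (\<forall>v. range v \<subseteq> alg_carrier A \<longrightarrow> eval_trm A v (fst e) = eval_trm A v (snd e))"

definition in_variety :: "('f \<Rightarrow> nat) \<Rightarrow> (('f, nat) trm \<times> ('f, nat) trm) set \<Rightarrow> ('a, 'f) alg \<Rightarrow> bool" where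
  "in_variety ar \<Sigma> A \<longleftrightarrow> is_algebra ar A \<and> (\<forall>e\<in>\<Sigma>. satisfies A e)"

definition wf_identities :: "('f \<Rightarrow> nat) \<Rightarrow> (('f, nat) trm \<times> ('f, nat) trm) set \<Rightarrow> bool" where
  "wf_identities ar \<Sigma> \<longleftrightarrow> (\<forall>e\<in>\<Sigma>. wf_trm ar (fst e) \<and> wf_trm ar (snd e))"

definition Con :: "('f \<Rightarrow> nat) \<Rightarrow> ('a, 'f) alg \<Rightarrow> ('a \<times> 'a) set set" where
  "Con ar A = {\<theta>. equiv (alg_carrier A) \<theta> \<and>
     (\<forall>f xs ys. length xs = ar f \<and> length ys = ar f \<and>
        (\<forall>i<ar f. (xs ! i, ys ! i) \<in> \<theta>) \<longrightarrow> (alg_op A f xs, alg_op A f ys) \<in> \<theta>)}"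

definition Delta :: "('a, 'f) alg \<Rightarrow> ('a \<times> 'a) set" where
  "Delta A = Id_on (alg_carrier A)"

definition Nabla :: "('a, 'f) alg \<Rightarrow> ('a \<times> 'a) set" where
  "Nabla A = alg_carrier A \<times> alg_carrier A"

definition Cg :: "('f \<Rightarrow> nat) \<Rightarrow> ('a, 'f) alg \<Rightarrow> ('a \<times> 'a) set \<Rightarrow> ('a \<times> 'a) set" where
  "Cg ar A S = Nabla A \<inter> \<Inter>{\<theta> \<in> Con ar A. S \<subseteq> \<theta>}"

definition cjoin :: "('f \<Rightarrow> nat) \<Rightarrow> ('a, 'f) alg \<Rightarrow> ('a \<times> 'a) set \<Rightarrow> ('a \<times> 'a) set \<Rightarrow> ('a \<times> 'a) set" where
  "cjoin ar A \<alpha> \<beta> = Cg ar A (\<alpha> \<union> \<beta>)"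

definition K :: "('f \<Rightarrow> nat) \<Rightarrow> ('a, 'f) alg \<Rightarrow> ('a \<times> 'a) set set" where
  "K ar A = {\<theta> \<in> Con ar A. \<forall>S \<subseteq> Con ar A. \<theta> \<subseteq> Cg ar A (\<Union>S) \<longrightarrow>
      (\<exists>S'. finite S' \<and> S' \<subseteq> S \<and> \<theta> \<subseteq> Cg ar A (\<Union>S'))}"

definition con_modular :: "('f \<Rightarrow> nat) \<Rightarrow> ('a, 'f) alg \<Rightarrow> bool" where
  "con_modular ar A \<longleftrightarrow> (\<forall>\<alpha>\<in>Con ar A. \<forall>\<beta>\<in>Con ar A. \<forall>\<gamma>\<in>Con ar A.
     \<alpha> \<subseteq> \<gamma> \<longrightarrow> cjoin ar A \<alpha> (\<beta> \<inter> \<gamma>) = cjoin ar A \<alpha> \<beta> \<inter> \<gamma>)"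

text \<open>Congruence modularity and semidegeneracy of V = Mod(Sigma) are tested on
all algebras of V whose carrier is a set of natural numbers (i.e. all countable
algebras of V up to isomorphism).\<close>

definition congruence_modular_variety :: "('f \<Rightarrow> nat) \<Rightarrow> (('f, nat) trm \<times> ('f, nat) trm) set \<Rightarrow> bool" where
  "congruence_modular_variety ar \<Sigma> \<longleftrightarrow>
     (\<forall>B :: (nat, 'f) alg. in_variety ar \<Sigma> B \<longrightarrow> con_modular ar B)"

definition one_element_subalgebra :: "('f \<Rightarrow> nat) \<Rightarrow> ('a, 'f) alg \<Rightarrow> 'a \<Rightarrow> bool" where
  "one_element_subalgebra ar A e \<longleftrightarrow> e \<in> alg_carrier A \<and>
     (\<forall>f. alg_op A f (replicate (ar f) e) = e)"

definition semidegenerate_variety :: "('f \<Rightarrow> nat) \<Rightarrow> (('f, nat) trm \<times> ('f, nat) trm) set \<Rightarrow> bool" where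
  "semidegenerate_variety ar \<Sigma> \<longleftrightarrow>
     (\<forall>B :: (nat, 'f) alg. in_variety ar \<Sigma> B \<and> (\<exists>x\<in>alg_carrier B. \<exists>y\<in>alg_carrier B. x \<noteq> y)
        \<longrightarrow> \<not> (\<exists>e. one_element_subalgebra ar B e))"

section \<open>The (Freese--McKenzie, term condition) commutator\<close>

text \<open>C(alpha,beta;delta): alpha centralizes beta modulo delta. Variable 0 of the
term plays the role of x, the other variables form the tuple y.\<close>
definition centralizes :: "('f \<Rightarrow> nat) \<Rightarrow> ('a, 'f) alg \<Rightarrow> ('a \<times> 'a) set \<Rightarrow> ('a \<times> 'a) set \<Rightarrow> ('a \<times> 'a) set \<Rightarrow> bool" where
  "centralizes ar A \<alpha> \<beta> \<delta> \<longleftrightarrow>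
     (\<forall>t :: ('f, nat) trm. \<forall>a b c d. wf_trm ar t \<and> (a, b) \<in> \<alpha> \<and>
        range c \<subseteq> alg_carrier A \<and> range d \<subseteq> alg_carrier A \<and> (\<forall>i. (c i, d i) \<in> \<beta>) \<and>
        (eval_trm A (c(0 := a)) t, eval_trm A (d(0 := a)) t) \<in> \<delta> \<longrightarrow>
        (eval_trm A (c(0 := b)) t, eval_trm A (d(0 := b)) t) \<in> \<delta>)"

definition comm :: "('f \<Rightarrow> nat) \<Rightarrow> ('a, 'f) alg \<Rightarrow> ('a \<times> 'a) set \<Rightarrow> ('a \<times> 'a) set \<Rightarrow> ('a \<times> 'a) set" where
  "comm ar A \<alpha> \<beta> = Nabla A \<inter> \<Inter>{\<delta> \<in> Con ar A. centralizes ar A \<alpha> \<beta> \<delta>}"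

definition prime_con :: "('f \<Rightarrow> nat) \<Rightarrow> ('a, 'f) alg \<Rightarrow> ('a \<times> 'a) set \<Rightarrow> bool" where
  "prime_con ar A \<phi> \<longleftrightarrow> \<phi> \<in> Con ar A \<and> \<phi> \<noteq> Nabla A \<and>
     (\<forall>\<alpha>\<in>Con ar A. \<forall>\<beta>\<in>Con ar A. comm ar A \<alpha> \<beta> \<subseteq> \<phi> \<longrightarrow> \<alpha> \<subseteq> \<phi> \<or> \<beta> \<subseteq> \<phi>)"

definition Spec :: "('f \<Rightarrow> nat) \<Rightarrow> ('a, 'f) alg \<Rightarrow> ('a \<times> 'a) set set" where
  "Spec ar A = {\<phi>. prime_con ar A \<phi>}"

definition rho :: "('f \<Rightarrow> nat) \<Rightarrow> ('a, 'f) alg \<Rightarrow> ('a \<times> 'a) set \<Rightarrow> ('a \<times> 'a) set" where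
  "rho ar A \<theta> = Nabla A \<inter> \<Inter>{\<phi> \<in> Spec ar A. \<theta> \<subseteq> \<phi>}"

definition V_A :: "('f \<Rightarrow> nat) \<Rightarrow> ('a, 'f) alg \<Rightarrow> ('a \<times> 'a) set \<Rightarrow> ('a \<times> 'a) set set" where
  "V_A ar A \<theta> = {\<phi> \<in> Spec ar A. \<theta> \<subseteq> \<phi>}"

definition D_A :: "('f \<Rightarrow> nat) \<Rightarrow> ('a, 'f) alg \<Rightarrow> ('a \<times> 'a) set \<Rightarrow> ('a \<times> 'a) set set" where
  "D_A ar A \<theta> = Spec ar A - V_A ar A \<theta>"

definition spec_open :: "('f \<Rightarrow> nat) \<Rightarrow> ('a, 'f) alg \<Rightarrow> ('a \<times> 'a) set set set" where
  "spec_open ar A = D_A ar A ` Con ar A"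

definition Clop :: "('f \<Rightarrow> nat) \<Rightarrow> ('a, 'f) alg \<Rightarrow> ('a \<times> 'a) set set set" where
  "Clop ar A = {U \<in> spec_open ar A. Spec ar A - U \<in> spec_open ar A}"

definition BCon :: "('f \<Rightarrow> nat) \<Rightarrow> ('a, 'f) alg \<Rightarrow> ('a \<times> 'a) set set" where
  "BCon ar A = {\<alpha> \<in> Con ar A. \<exists>\<beta>\<in>Con ar A. \<alpha> \<inter> \<beta> = Delta A \<and> cjoin ar A \<alpha> \<beta> = Nabla A}"

definition D_boolean_iso :: "('f \<Rightarrow> nat) \<Rightarrow> ('a, 'f) alg \<Rightarrow> bool" where
  "D_boolean_iso ar A \<longleftrightarrow> bij_betw (D_A ar A) (BCon ar A) (Clop ar A) \<and>
     (\<forall>\<alpha>\<in>BCon ar A. \<forall>\<beta>\<in>BCon ar A.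
        D_A ar A (\<alpha> \<inter> \<beta>) = D_A ar A \<alpha> \<inter> D_A ar A \<beta> \<and>
        D_A ar A (cjoin ar A \<alpha> \<beta>) = D_A ar A \<alpha> \<union> D_A ar A \<beta>) \<and>
     D_A ar A (Delta A) = {} \<and> D_A ar A (Nabla A) = Spec ar A"

definition retic_rel :: "('f \<Rightarrow> nat) \<Rightarrow> ('a, 'f) alg \<Rightarrow> (('a \<times> 'a) set \<times> ('a \<times> 'a) set) set" where
  "retic_rel ar A = {(\<alpha>, \<beta>). \<alpha> \<in> K ar A \<and> \<beta> \<in> K ar A \<and> rho ar A \<alpha> = rho ar A \<beta>}"

definition L :: "('f \<Rightarrow> nat) \<Rightarrow> ('a, 'f) alg \<Rightarrow> ('a \<times> 'a) set set set" where
  "L ar A = K ar A // retic_rel ar A"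

definition lam :: "('f \<Rightarrow> nat) \<Rightarrow> ('a, 'f) alg \<Rightarrow> ('a \<times> 'a) set \<Rightarrow> ('a \<times> 'a) set set" where
  "lam ar A \<alpha> = retic_rel ar A `` {\<alpha>}"

text \<open>In L(A): lam a \<and> lam b = lam [a,b], lam a \<or> lam b = lam (a \<or> b),
0 = lam Delta, 1 = lam Nabla. B(L(A)) = complemented elements of L(A).\<close>
definition BL :: "('f \<Rightarrow> nat) \<Rightarrow> ('a, 'f) alg \<Rightarrow> ('a \<times> 'a) set set set" where
  "BL ar A = {x \<in> L ar A. \<exists>\<alpha>\<in>K ar A. \<exists>\<beta>\<in>K ar A. x = lam ar A \<alpha> \<and>
      lam ar A (comm ar A \<alpha> \<beta>) = lam ar A (Delta A) \<and>
      lam ar A (cjoin ar A \<alpha> \<beta>) = lam ar A (Nabla A)}"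

definition preserves_boolean_center :: "('f \<Rightarrow> nat) \<Rightarrow> ('a, 'f) alg \<Rightarrow> bool" where
  "preserves_boolean_center ar A \<longleftrightarrow> (\<forall>x\<in>BL ar A. \<exists>\<alpha>\<in>BCon ar A. lam ar A \<alpha> = x)"

end

theory Submission
  imports Defs "HOL-Library.Countable_Set"
begin



lemma Con_sub: "\<theta> \<in> Con ar A \<Longrightarrow> \<theta> \<subseteq> Nabla A"
  by (auto simp: Con_def Nabla_def equiv_def)

lemma Con_refl: "\<theta> \<in> Con ar A \<Longrightarrow> a \<in> alg_carrier A \<Longrightarrow> (a, a) \<in> \<theta>"
  by (auto simp: Con_def equiv_def refl_on_def)

lemma Con_sym: "\<theta> \<in> Con ar A \<Longrightarrow> (a, b) \<in> \<theta> \<Longrightarrow> (b, a) \<in> \<theta>"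
  by (auto simp: Con_def equiv_def sym_def)

lemma Con_trans: "\<theta> \<in> Con ar A \<Longrightarrow> (a, b) \<in> \<theta> \<Longrightarrow> (b, c) \<in> \<theta> \<Longrightarrow> (a, c) \<in> \<theta>"
  unfolding Con_def equiv_def trans_def by blast

lemma Con_compat: "\<theta> \<in> Con ar A \<Longrightarrow> length xs = ar f \<Longrightarrow> length ys = ar f \<Longrightarrow>
   (\<And>i. i < ar f \<Longrightarrow> (xs ! i, ys ! i) \<in> \<theta>) \<Longrightarrow> (alg_op A f xs, alg_op A f ys) \<in> \<theta>"
  unfolding Con_def by blast

lemma ConI:
  assumes "\<theta> \<subseteq> Nabla A" "\<And>a. a \<in> alg_carrier A \<Longrightarrow> (a, a) \<in> \<theta>"
    "\<And>a b. (a, b) \<in> \<theta> \<Longrightarrow> (b, a) \<in> \<theta>"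
    "\<And>a b c. (a, b) \<in> \<theta> \<Longrightarrow> (b, c) \<in> \<theta> \<Longrightarrow> (a, c) \<in> \<theta>"
    "\<And>f xs ys. length xs = ar f \<Longrightarrow> length ys = ar f \<Longrightarrow>
       (\<forall>i<ar f. (xs ! i, ys ! i) \<in> \<theta>) \<Longrightarrow> (alg_op A f xs, alg_op A f ys) \<in> \<theta>"
  shows "\<theta> \<in> Con ar A"
  using assms unfolding Con_def equiv_def Nabla_def refl_on_def sym_def trans_def by blast

lemma alg_closed: "is_algebra ar A \<Longrightarrow> length xs = ar f \<Longrightarrow> set xs \<subseteq> alg_carrier A \<Longrightarrow>
   alg_op A f xs \<in> alg_carrier A"
  unfolding is_algebra_def by blast

lemma Nabla_compat:
  assumes "is_algebra ar A" "length xs = ar f" "length ys = ar f"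
    "\<forall>i<ar f. (xs ! i, ys ! i) \<in> Nabla A"
  shows "(alg_op A f xs, alg_op A f ys) \<in> Nabla A"
proof -
  have "set xs \<subseteq> alg_carrier A" "set ys \<subseteq> alg_carrier A"
    using assms by (auto simp: Nabla_def in_set_conv_nth)
  then show ?thesis using assms alg_closed[OF assms(1)] by (auto simp: Nabla_def)
qed

lemma Inter_Con:
  assumes alg: "is_algebra ar A" and S: "S \<subseteq> Con ar A"
  shows "Nabla A \<inter> \<Inter>S \<in> Con ar A"
proof (rule ConI)
  show "\<And>f xs ys. length xs = ar f \<Longrightarrow> length ys = ar f \<Longrightarrow>
       (\<forall>i<ar f. (xs ! i, ys ! i) \<in> Nabla A \<inter> \<Inter> S) \<Longrightarrow>
       (alg_op A f xs, alg_op A f ys) \<in> Nabla A \<inter> \<Inter> S"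
  proof -
    fix f xs ys assume l: "length xs = ar f" "length ys = ar f"
      and r: "\<forall>i<ar f. (xs ! i, ys ! i) \<in> Nabla A \<inter> \<Inter> S"
    have "(alg_op A f xs, alg_op A f ys) \<in> Nabla A" using Nabla_compat[OF alg l] r by blast
    moreover have "(alg_op A f xs, alg_op A f ys) \<in> \<theta>" if "\<theta> \<in> S" for \<theta>
      using Con_compat[of \<theta> ar A, OF _ l] S that r by blast
    ultimately show "(alg_op A f xs, alg_op A f ys) \<in> Nabla A \<inter> \<Inter> S" by blast
  qed
next
  fix a assume "a \<in> alg_carrier A"
  then show "(a, a) \<in> Nabla A \<inter> \<Inter> S" using Con_refl[of _ ar A a] S by (auto simp: Nabla_def)
next
  fix a b assume "(a, b) \<in> Nabla A \<inter> \<Inter> S"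
  then show "(b, a) \<in> Nabla A \<inter> \<Inter> S" using Con_sym[of _ ar A a b] S by (auto simp: Nabla_def)
next
  fix a b c assume "(a, b) \<in> Nabla A \<inter> \<Inter> S" "(b, c) \<in> Nabla A \<inter> \<Inter> S"
  then show "(a, c) \<in> Nabla A \<inter> \<Inter> S" using Con_trans[of _ ar A a b c] S by (auto simp: Nabla_def)
qed blast

lemma Cg_Con: "is_algebra ar A \<Longrightarrow> Cg ar A S \<in> Con ar A"
  unfolding Cg_def by (rule Inter_Con) auto

lemma Cg_least: "\<theta> \<in> Con ar A \<Longrightarrow> S \<subseteq> \<theta> \<Longrightarrow> Cg ar A S \<subseteq> \<theta>"
  unfolding Cg_def by blast

lemma Cg_incl: "S \<subseteq> Nabla A \<Longrightarrow> S \<subseteq> Cg ar A S"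
  unfolding Cg_def by blast

lemma Cg_mono: "S \<subseteq> T \<Longrightarrow> Cg ar A S \<subseteq> Cg ar A T"
  unfolding Cg_def by blast

lemma Cg_sub: "Cg ar A S \<subseteq> Nabla A"
  unfolding Cg_def by blast

lemma K_Con: "\<theta> \<in> K ar A \<Longrightarrow> \<theta> \<in> Con ar A"
  unfolding K_def by blast

lemma KD: "\<theta> \<in> K ar A \<Longrightarrow> S \<subseteq> Con ar A \<Longrightarrow> \<theta> \<subseteq> Cg ar A (\<Union>S) \<Longrightarrow>
   \<exists>S'. finite S' \<and> S' \<subseteq> S \<and> \<theta> \<subseteq> Cg ar A (\<Union>S')"
  unfolding K_def by blast

lemma directed:
  assumes alg: "is_algebra ar A" and S: "S \<subseteq> Con ar A" and p: "p \<in> Cg ar A (\<Union>S)"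
  shows "\<exists>S'. finite S' \<and> S' \<subseteq> S \<and> p \<in> Cg ar A (\<Union>S')"
proof -
  define U where "U = \<Union>{Cg ar A (\<Union>S') | S'. finite S' \<and> S' \<subseteq> S}"
  have UCon: "U \<in> Con ar A"
  proof (rule ConI)
    show "U \<subseteq> Nabla A" unfolding U_def using Cg_sub by blast
  next
    fix a assume "a \<in> alg_carrier A"
    then have "(a, a) \<in> Cg ar A (\<Union>{})" using Con_refl[OF Cg_Con[OF alg]] by blast
    then show "(a, a) \<in> U" unfolding U_def by blast
  next
    fix a b assume "(a, b) \<in> U"
    then obtain S' where "finite S' \<and> S' \<subseteq> S" "(a, b) \<in> Cg ar A (\<Union>S')" unfolding U_def by blast
    then show "(b, a) \<in> U" unfolding U_def using Con_sym[OF Cg_Con[OF alg]] by blast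
  next
    fix a b c assume "(a, b) \<in> U" "(b, c) \<in> U"
    then obtain S1 S2 where S12: "finite S1" "S1 \<subseteq> S" "(a, b) \<in> Cg ar A (\<Union>S1)"
       "finite S2" "S2 \<subseteq> S" "(b, c) \<in> Cg ar A (\<Union>S2)" unfolding U_def by blast
    then have "(a, b) \<in> Cg ar A (\<Union>(S1 \<union> S2))" "(b, c) \<in> Cg ar A (\<Union>(S1 \<union> S2))"
      using Cg_mono[of "\<Union>S1" "\<Union>(S1 \<union> S2)"] Cg_mono[of "\<Union>S2" "\<Union>(S1 \<union> S2)"] by blast+
    then have "(a, c) \<in> Cg ar A (\<Union>(S1 \<union> S2))" by (rule Con_trans[OF Cg_Con[OF alg]])
    then show "(a, c) \<in> U" unfolding U_def using S12 by blast
  next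
    fix f xs ys assume l: "length xs = ar f" "length ys = ar f" and
      r: "\<forall>i<ar f. (xs ! i, ys ! i) \<in> U"
    then have "\<forall>i\<in>{..<ar f}. \<exists>S'. finite S' \<and> S' \<subseteq> S \<and> (xs ! i, ys ! i) \<in> Cg ar A (\<Union>S')"
      unfolding U_def by blast
    then obtain Sf where Sf: "\<forall>i\<in>{..<ar f}. finite (Sf i) \<and> Sf i \<subseteq> S \<and> (xs ! i, ys ! i) \<in> Cg ar A (\<Union>(Sf i))"
      by metis
    define S'' where "S'' = (\<Union>i<ar f. Sf i)"
    have fin: "finite S''" "S'' \<subseteq> S" using Sf unfolding S''_def by auto
    have "\<forall>i<ar f. (xs ! i, ys ! i) \<in> Cg ar A (\<Union>S'')"
    proof (intro allI impI)
      fix i assume "i < ar f"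
      then have "\<Union>(Sf i) \<subseteq> \<Union>S''" unfolding S''_def by auto
      then show "(xs ! i, ys ! i) \<in> Cg ar A (\<Union>S'')" using Sf Cg_mono \<open>i < ar f\<close> by blast
    qed
    then have "(alg_op A f xs, alg_op A f ys) \<in> Cg ar A (\<Union>S'')"
      using Con_compat[OF Cg_Con[OF alg] l] by blast
    then show "(alg_op A f xs, alg_op A f ys) \<in> U" unfolding U_def using fin by blast
  qed
  have "\<Union>S \<subseteq> U"
  proof
    fix q assume "q \<in> \<Union>S"
    then obtain \<theta> where "\<theta> \<in> S" "q \<in> \<theta>" by blast
    then have "q \<in> Cg ar A (\<Union>{\<theta>})" using Cg_incl[of \<theta> A ar] Con_sub S by auto
    then show "q \<in> U" unfolding U_def using \<open>\<theta> \<in> S\<close> by blast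
  qed
  then have "Cg ar A (\<Union>S) \<subseteq> U" using Cg_least[OF UCon] by blast
  then show ?thesis using p unfolding U_def by blast
qed

lemma finite_Cg_K:
  assumes alg: "is_algebra ar A" and P: "finite P" "P \<subseteq> Nabla A"
  shows "Cg ar A P \<in> K ar A"
  unfolding K_def
proof (intro CollectI conjI allI impI)
  show "Cg ar A P \<in> Con ar A" by (rule Cg_Con[OF alg])
  fix S assume S: "S \<subseteq> Con ar A" "Cg ar A P \<subseteq> Cg ar A (\<Union>S)"
  have "\<forall>p\<in>P. \<exists>S'. finite S' \<and> S' \<subseteq> S \<and> p \<in> Cg ar A (\<Union>S')"
    using directed[OF alg S(1)] S(2) Cg_incl[OF P(2)] by blast
  then obtain Sf where Sf: "\<forall>p\<in>P. finite (Sf p) \<and> Sf p \<subseteq> S \<and> p \<in> Cg ar A (\<Union>(Sf p))" by metis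
  define S' where "S' = (\<Union>p\<in>P. Sf p)"
  have "finite S'" "S' \<subseteq> S" using Sf P unfolding S'_def by auto
  moreover have "P \<subseteq> Cg ar A (\<Union>S')"
  proof
    fix p assume "p \<in> P"
    then have "\<Union>(Sf p) \<subseteq> \<Union>S'" unfolding S'_def by auto
    then show "p \<in> Cg ar A (\<Union>S')" using Sf Cg_mono \<open>p \<in> P\<close> by blast
  qed
  then have "Cg ar A P \<subseteq> Cg ar A (\<Union>S')" using Cg_least[OF Cg_Con[OF alg]] by blast
  ultimately show "\<exists>S'. finite S' \<and> S' \<subseteq> S \<and> Cg ar A P \<subseteq> Cg ar A (\<Union>S')" by blast
qed

lemma cjoin_K:
  assumes alg: "is_algebra ar A" and a: "\<alpha> \<in> K ar A" and b: "\<beta> \<in> K ar A"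
  shows "cjoin ar A \<alpha> \<beta> \<in> K ar A"
  unfolding K_def
proof (intro CollectI conjI allI impI)
  show "cjoin ar A \<alpha> \<beta> \<in> Con ar A" unfolding cjoin_def by (rule Cg_Con[OF alg])
  fix S assume S: "S \<subseteq> Con ar A" "cjoin ar A \<alpha> \<beta> \<subseteq> Cg ar A (\<Union>S)"
  have "\<alpha> \<union> \<beta> \<subseteq> Nabla A" using Con_sub[OF K_Con[OF a]] Con_sub[OF K_Con[OF b]] by blast
  then have ab: "\<alpha> \<union> \<beta> \<subseteq> cjoin ar A \<alpha> \<beta>" unfolding cjoin_def by (rule Cg_incl)
  have "\<alpha> \<subseteq> Cg ar A (\<Union>S)" "\<beta> \<subseteq> Cg ar A (\<Union>S)" using ab S(2) by auto
  obtain S1 where S1: "finite S1" "S1 \<subseteq> S" "\<alpha> \<subseteq> Cg ar A (\<Union>S1)"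
    using KD[OF a S(1) \<open>\<alpha> \<subseteq> Cg ar A (\<Union>S)\<close>] by blast
  obtain S2 where S2: "finite S2" "S2 \<subseteq> S" "\<beta> \<subseteq> Cg ar A (\<Union>S2)"
    using KD[OF b S(1) \<open>\<beta> \<subseteq> Cg ar A (\<Union>S)\<close>] by blast
  have m1: "Cg ar A (\<Union>S1) \<subseteq> Cg ar A (\<Union>(S1 \<union> S2))" by (rule Cg_mono) blast
  have m2: "Cg ar A (\<Union>S2) \<subseteq> Cg ar A (\<Union>(S1 \<union> S2))" by (rule Cg_mono) blast
  have "\<alpha> \<union> \<beta> \<subseteq> Cg ar A (\<Union>(S1 \<union> S2))"
    using S1(3) S2(3) m1 m2 by (metis Un_least order_trans)
  then have "cjoin ar A \<alpha> \<beta> \<subseteq> Cg ar A (\<Union>(S1 \<union> S2))"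
    unfolding cjoin_def by (rule Cg_least[OF Cg_Con[OF alg]])
  moreover have "finite (S1 \<union> S2)" "S1 \<union> S2 \<subseteq> S" using S1 S2 by auto
  ultimately show "\<exists>S'. finite S' \<and> S' \<subseteq> S \<and> cjoin ar A \<alpha> \<beta> \<subseteq> Cg ar A (\<Union>S')"
    by blast
qed




lemma upd_chain:
  assumes RC: "R \<subseteq> C \<times> C"
    and stp0: "\<And>a b zs k. (a, b) \<in> R \<Longrightarrow> length zs = n \<Longrightarrow> set zs \<subseteq> C \<Longrightarrow> k < n \<Longrightarrow>
        (F (zs[k := a]), F (zs[k := b])) \<in> R\<^sup>*"
    and l: "length xs = n" "length ys = n"
    and r: "\<forall>i<n. (xs ! i, ys ! i) \<in> R\<^sup>*"
    and s: "set xs \<subseteq> C" "set ys \<subseteq> C"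
  shows "(F xs, F ys) \<in> R\<^sup>*"
proof -
  have "k \<le> n \<Longrightarrow> (F xs, F (take k ys @ drop k xs)) \<in> R\<^sup>*" for k
  proof (induction k)
    case 0 then show ?case by simp
  next
    case (Suc k)
    then have kn: "k < n" by simp
    define W where "W c = take k ys @ c # drop (Suc k) xs" for c
    have e1: "take k ys @ drop k xs = W (xs ! k)"
      unfolding W_def using kn l by (simp add: Cons_nth_drop_Suc)
    have e2: "take (Suc k) ys @ drop (Suc k) xs = W (ys ! k)"
      unfolding W_def using kn l by (simp add: take_Suc_conv_app_nth)
    define zs where "zs = W (xs ! k)"
    have lz: "length zs = n" unfolding zs_def W_def using kn l by simp
    have "set (take k ys) \<subseteq> C" using set_take_subset[of k ys] s(2) by (rule order_trans)
    moreover have "set (drop (Suc k) xs) \<subseteq> C" using set_drop_subset[of "Suc k" xs] s(1) by (rule order_trans)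
    moreover have "xs ! k \<in> C" using nth_mem[of k xs] kn l s(1) by auto
    ultimately have sz: "set zs \<subseteq> C" unfolding zs_def W_def by simp
    have Wu: "W c = zs[k := c]" for c
      unfolding zs_def W_def using kn l by (simp add: list_update_append)
    have "(xs ! k, c) \<in> R\<^sup>* \<Longrightarrow> (F zs, F (W c)) \<in> R\<^sup>*" for c
    proof (induction rule: rtrancl_induct)
      case base then show ?case by (simp add: zs_def)
    next
      case (step b c)
      have "(F (zs[k := b]), F (zs[k := c])) \<in> R\<^sup>*" using step(2) lz sz kn by (rule stp0)
      then show ?case using step(3) Wu by simp
    qed
    then have "(F zs, F (W (ys ! k))) \<in> R\<^sup>*" using r kn by blast
    then show ?case using Suc e1 e2 zs_def by simp
  qed
  from this[of n] show ?thesis using l by simp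
qed

lemma cjoin_rtrancl:
  assumes alg: "is_algebra ar A" and a: "\<alpha> \<in> Con ar A" and b: "\<beta> \<in> Con ar A"
  shows "cjoin ar A \<alpha> \<beta> \<subseteq> (\<alpha> \<union> \<beta>)\<^sup>*"
proof -
  let ?R = "\<alpha> \<union> \<beta>"
  let ?C = "alg_carrier A"
  have RC: "?R \<subseteq> ?C \<times> ?C" using Con_sub[OF a] Con_sub[OF b] by (auto simp: Nabla_def)
  have stp: "(alg_op A f (zs[k := x]), alg_op A f (zs[k := y])) \<in> ?R\<^sup>*"
    if xy: "(x, y) \<in> ?R" and lzs: "length zs = ar f" and szs: "set zs \<subseteq> ?C" and kf: "k < ar f" for x y zs k f
  proof -
    have "(alg_op A f (zs[k := x]), alg_op A f (zs[k := y])) \<in> \<theta>"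
      if th: "\<theta> \<in> Con ar A" "(x, y) \<in> \<theta>" for \<theta>
    proof (rule Con_compat[OF th(1)])
      fix i assume "i < ar f"
      show "(zs[k := x] ! i, zs[k := y] ! i) \<in> \<theta>"
      proof (cases "i = k")
        case True then show ?thesis using th \<open>k < ar f\<close> \<open>length zs = ar f\<close> by simp
      next
        case False
        have "zs ! i \<in> ?C" using nth_mem[of i zs] \<open>i < ar f\<close> \<open>length zs = ar f\<close> \<open>set zs \<subseteq> ?C\<close> by auto
        then show ?thesis using Con_refl[OF th(1)] False by simp
      qed
    qed (use lzs in simp_all)
    then show ?thesis using xy a b by blast
  qed
  define T where "T = Nabla A \<inter> ?R\<^sup>*"
  have "T \<in> Con ar A"
  proof (rule ConI)
    show "T \<subseteq> Nabla A" unfolding T_def by blast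
  next
    fix x y assume "(x, y) \<in> T"
    moreover have "sym (?R\<^sup>*)"
      using Con_sym[OF a] Con_sym[OF b] by (intro sym_rtrancl) (auto simp: sym_def)
    ultimately show "(y, x) \<in> T" unfolding T_def Nabla_def by (auto dest: symD)
  next
    fix x y z assume "(x, y) \<in> T" "(y, z) \<in> T"
    then show "(x, z) \<in> T" unfolding T_def Nabla_def by auto
  next
    fix f xs ys assume l: "length xs = ar f" "length ys = ar f" and r: "\<forall>i<ar f. (xs ! i, ys ! i) \<in> T"
    have s: "set xs \<subseteq> ?C" "set ys \<subseteq> ?C"
    proof -
      show "set xs \<subseteq> ?C"
      proof
        fix x assume "x \<in> set xs"
        then obtain i where "i < length xs" "xs ! i = x" by (auto simp: in_set_conv_nth)
        then show "x \<in> ?C" using r l by (auto simp: T_def Nabla_def)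
      qed
      show "set ys \<subseteq> ?C"
      proof
        fix x assume "x \<in> set ys"
        then obtain i where "i < length ys" "ys ! i = x" by (auto simp: in_set_conv_nth)
        then show "x \<in> ?C" using r l by (auto simp: T_def Nabla_def)
      qed
    qed
    have "(alg_op A f xs, alg_op A f ys) \<in> ?R\<^sup>*"
      by (rule upd_chain[OF RC _ l _ s, where F = "alg_op A f"]) (use stp r T_def in auto)
    moreover have "(alg_op A f xs, alg_op A f ys) \<in> Nabla A"
      using s l alg_closed[OF alg] by (auto simp: Nabla_def)
    ultimately show "(alg_op A f xs, alg_op A f ys) \<in> T" unfolding T_def by blast
  qed (auto simp: T_def Nabla_def)
  moreover have "?R \<subseteq> T" unfolding T_def using RC by (auto simp: Nabla_def)
  ultimately have "cjoin ar A \<alpha> \<beta> \<subseteq> T" unfolding cjoin_def by (rule Cg_least)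
  then show ?thesis unfolding T_def by blast
qed

lemma chain_finite:
  assumes "(a, b) \<in> R\<^sup>*" "R \<subseteq> C \<times> C" "a \<in> C"
  shows "\<exists>F. finite F \<and> F \<subseteq> C \<and> a \<in> F \<and> b \<in> F \<and> (a, b) \<in> (R \<inter> F \<times> F)\<^sup>*"
  using assms(1)
proof (induction rule: rtrancl_induct)
  case base then show ?case using assms(3) by (intro exI[of _ "{a}"]) auto
next
  case (step b c)
  then obtain F where F: "finite F" "F \<subseteq> C" "a \<in> F" "b \<in> F" "(a, b) \<in> (R \<inter> F \<times> F)\<^sup>*" by blast
  let ?F = "insert c F"
  have "(a, b) \<in> (R \<inter> ?F \<times> ?F)\<^sup>*" using F(5) by (rule rtrancl_mono[THEN subsetD, rotated]) blast
  moreover have "(b, c) \<in> R \<inter> ?F \<times> ?F" using step F by blast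
  ultimately have "(a, c) \<in> (R \<inter> ?F \<times> ?F)\<^sup>*" by (rule rtrancl_into_rtrancl)
  moreover have "c \<in> C" using step assms(2) by blast
  ultimately show ?case using F by (intro exI[of _ ?F]) auto
qed

inductive_set Sg :: "('f \<Rightarrow> nat) \<Rightarrow> ('a, 'f) alg \<Rightarrow> 'a set \<Rightarrow> 'a set"
  for ar A X where
  base: "x \<in> X \<Longrightarrow> x \<in> Sg ar A X"
| opr: "length xs = ar f \<Longrightarrow> \<forall>x\<in>set xs. x \<in> Sg ar A X \<Longrightarrow> alg_op A f xs \<in> Sg ar A X"

lemma Sg_carrier_mem:
  assumes alg: "is_algebra ar A" and X: "X \<subseteq> alg_carrier A" and x: "x \<in> Sg ar A X"
  shows "x \<in> alg_carrier A"
  using x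
proof (induction rule: Sg.induct)
  case (base x) then show ?case using X by blast
next
  case (opr xs f)
  then have "set xs \<subseteq> alg_carrier A" by blast
  then show ?case using alg_closed[OF alg opr(1)] by blast
qed

lemma Sg_carrier: "is_algebra ar A \<Longrightarrow> X \<subseteq> alg_carrier A \<Longrightarrow> Sg ar A X \<subseteq> alg_carrier A"
  by (rule subsetI, rule Sg_carrier_mem)

fun stage :: "('f \<Rightarrow> nat) \<Rightarrow> ('a, 'f) alg \<Rightarrow> 'a set \<Rightarrow> nat \<Rightarrow> 'a set" where
  "stage ar A X 0 = X"
| "stage ar A X (Suc n) = stage ar A X n \<union>
     (\<Union>f. alg_op A f ` {xs. set xs \<subseteq> stage ar A X n \<and> length xs = ar f})"

lemma stage_countable:
  assumes "finite (UNIV :: 'f set)" "countable X"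
  shows "countable (stage ar (A :: ('a, 'f) alg) X n)"
proof (induction n)
  case 0 then show ?case using assms by simp
next
  case (Suc n)
  have "countable {xs. set xs \<subseteq> stage ar A X n \<and> length xs = ar f}" for f
    by (rule countable_subset[of _ "lists (stage ar A X n)"]) (use Suc in auto)
  moreover have "countable (UNIV :: 'f set)" using assms(1) by (rule countable_finite)
  ultimately show ?case using Suc by (auto intro!: countable_UN)
qed

lemma stage_mono: "m \<le> n \<Longrightarrow> stage ar A X m \<subseteq> stage ar A X n"
  by (rule lift_Suc_mono_le[of "stage ar A X"]) auto

lemma finite_in_stage:
  assumes "finite s" "s \<subseteq> (\<Union>n. stage ar A X n)"
  shows "\<exists>n. s \<subseteq> stage ar A X n"
  using assms
proof (induction rule: finite_induct)
  case empty then show ?case by simp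
next
  case (insert x F)
  then obtain n m where "F \<subseteq> stage ar A X n" "x \<in> stage ar A X m" by blast
  then have "insert x F \<subseteq> stage ar A X (max n m)"
    using stage_mono[of n "max n m" ar A X] stage_mono[of m "max n m" ar A X] by auto
  then show ?case by blast
qed

lemma Sg_countable:
  assumes "finite (UNIV :: 'f set)" "countable X"
  shows "countable (Sg ar (A :: ('a, 'f) alg) X)"
proof -
  have "Sg ar A X \<subseteq> (\<Union>n. stage ar A X n)"
  proof
    fix x assume "x \<in> Sg ar A X"
    then show "x \<in> (\<Union>n. stage ar A X n)"
    proof (induction rule: Sg.induct)
      case (base x) then show ?case by (auto intro: exI[of _ 0])
    next
      case (opr xs f)
      then obtain n where "set xs \<subseteq> stage ar A X n" using finite_in_stage[of "set xs"] by blast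
      then have "alg_op A f xs \<in> stage ar A X (Suc n)" using opr by auto
      then show ?case by blast
    qed
  qed
  moreover have "countable (\<Union>n. stage ar A X n)" using stage_countable[OF assms] by auto
  ultimately show ?thesis by (rule countable_subset)
qed




definition natcopy :: "'a set \<Rightarrow> ('a, 'f) alg \<Rightarrow> (nat, 'f) alg" where
  "natcopy B A = \<lparr>alg_carrier = to_nat_on B ` B,
     alg_op = (\<lambda>f xs. to_nat_on B (alg_op A f (map (from_nat_into B) xs)))\<rparr>"

definition restr :: "'a set \<Rightarrow> ('a \<times> 'a) set \<Rightarrow> (nat \<times> nat) set" where
  "restr B \<theta> = map_prod (to_nat_on B) (to_nat_on B) ` (\<theta> \<inter> B \<times> B)"

lemma natcopy_simps[simp]:
  "alg_carrier (natcopy B A) = to_nat_on B ` B"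
  "alg_op (natcopy B A) f xs = to_nat_on B (alg_op A f (map (from_nat_into B) xs))"
  by (simp_all add: natcopy_def)

lemma hg: "countable B \<Longrightarrow> u \<in> to_nat_on B ` B \<Longrightarrow>
   from_nat_into B u \<in> B \<and> to_nat_on B (from_nat_into B u) = u"
  by auto

lemma mem_restr:
  assumes "countable B" "a \<in> B" "b \<in> B"
  shows "(to_nat_on B a, to_nat_on B b) \<in> restr B \<theta> \<longleftrightarrow> (a, b) \<in> \<theta>"
proof
  assume "(to_nat_on B a, to_nat_on B b) \<in> restr B \<theta>"
  then obtain a0 b0 where "(a0, b0) \<in> \<theta>" "a0 \<in> B" "b0 \<in> B"
    "to_nat_on B a = to_nat_on B a0" "to_nat_on B b = to_nat_on B b0"
    unfolding restr_def by auto
  moreover have "inj_on (to_nat_on B) B" using assms(1) by (rule inj_on_to_nat_on)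
  ultimately show "(a, b) \<in> \<theta>" using assms(2,3) by (metis inj_onD)
next
  assume "(a, b) \<in> \<theta>"
  then show "(to_nat_on B a, to_nat_on B b) \<in> restr B \<theta>" using assms unfolding restr_def by force
qed

lemma restr_D:
  assumes "countable B" "(u, v) \<in> restr B \<theta>"
  shows "u \<in> to_nat_on B ` B \<and> v \<in> to_nat_on B ` B \<and> (from_nat_into B u, from_nat_into B v) \<in> \<theta>"
  using assms unfolding restr_def by auto

lemma restr_mono: "\<theta> \<subseteq> \<eta> \<Longrightarrow> restr B \<theta> \<subseteq> restr B \<eta>"
  unfolding restr_def by blast

lemma map_g_in:
  assumes "countable B" "set xs \<subseteq> to_nat_on B ` B"
  shows "set (map (from_nat_into B) xs) \<subseteq> B"
  using assms hg[OF assms(1)] by auto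

lemma eval_transfer:
  assumes cB: "countable B"
    and clo: "\<And>f xs. length xs = ar f \<Longrightarrow> set xs \<subseteq> B \<Longrightarrow> alg_op A f xs \<in> B"
    and v: "range v \<subseteq> to_nat_on B ` B"
  shows "wf_trm ar t \<Longrightarrow> eval_trm A (from_nat_into B \<circ> v) t \<in> B \<and>
     eval_trm (natcopy B A) v t = to_nat_on B (eval_trm A (from_nat_into B \<circ> v) t)"
proof (induction t)
  case (Var x)
  have "v x \<in> to_nat_on B ` B" using v by blast
  then show ?case using hg[OF cB] by simp
next
  case (Fn f ts)
  let ?e = "eval_trm A (from_nat_into B \<circ> v)"
  let ?e' = "eval_trm (natcopy B A) v"
  have l: "length ts = ar f" and w: "\<forall>t\<in>set ts. wf_trm ar t" using Fn.prems by auto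
  have IH: "?e t \<in> B \<and> ?e' t = to_nat_on B (?e t)" if "t \<in> set ts" for t
    using Fn.IH[OF that] w that by blast
  have m: "map (from_nat_into B) (map ?e' ts) = map ?e ts"
    using IH cB by simp
  have "set (map ?e ts) \<subseteq> B" using IH by auto
  then have inB: "alg_op A f (map ?e ts) \<in> B" using clo l by simp
  have e1: "?e (Fn f ts) = alg_op A f (map ?e ts)" by (simp only: eval_trm.simps)
  have e2: "?e' (Fn f ts) = to_nat_on B (alg_op A f (map (from_nat_into B) (map ?e' ts)))"
    by (simp only: eval_trm.simps natcopy_simps)
  show ?case unfolding e1 e2 m using inB by simp
qed

lemma natcopy_variety:
  assumes var: "in_variety ar \<Sigma> A" and wf: "wf_identities ar \<Sigma>" and cB: "countable B"
    and BC: "B \<subseteq> alg_carrier A" and Bne: "B \<noteq> {}"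
    and clo: "\<And>f xs. length xs = ar f \<Longrightarrow> set xs \<subseteq> B \<Longrightarrow> alg_op A f xs \<in> B"
  shows "in_variety ar \<Sigma> (natcopy B A)"
  unfolding in_variety_def
proof (intro conjI ballI)
  show "is_algebra ar (natcopy B A)"
    unfolding is_algebra_def
  proof (intro conjI allI impI)
    show "alg_carrier (natcopy B A) \<noteq> {}" using Bne by simp
    fix f xs assume a: "length xs = ar f \<and> set xs \<subseteq> alg_carrier (natcopy B A)"
    then have "set (map (from_nat_into B) xs) \<subseteq> B" using map_g_in[OF cB] by simp
    then have "alg_op A f (map (from_nat_into B) xs) \<in> B" using clo a by simp
    then show "alg_op (natcopy B A) f xs \<in> alg_carrier (natcopy B A)" by simp
  qed
next
  fix e assume e: "e \<in> \<Sigma>"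
  have A: "satisfies A e" using var e unfolding in_variety_def by blast
  have w1: "wf_trm ar (fst e)" and w2: "wf_trm ar (snd e)" using wf e unfolding wf_identities_def by auto
  show "satisfies (natcopy B A) e"
    unfolding satisfies_def
  proof (intro allI impI)
    fix v :: "nat \<Rightarrow> nat" assume v: "range v \<subseteq> alg_carrier (natcopy B A)"
    then have v': "range v \<subseteq> to_nat_on B ` B" by simp
    have "range (from_nat_into B \<circ> v) \<subseteq> B" using v' hg[OF cB] by auto
    then have "range (from_nat_into B \<circ> v) \<subseteq> alg_carrier A" using BC by blast
    then have eq: "eval_trm A (from_nat_into B \<circ> v) (fst e) = eval_trm A (from_nat_into B \<circ> v) (snd e)"
      using A unfolding satisfies_def by blast
    show "eval_trm (natcopy B A) v (fst e) = eval_trm (natcopy B A) v (snd e)"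
      using eval_transfer[OF cB clo v' w1] eval_transfer[OF cB clo v' w2] eq by simp
  qed
qed

lemma restr_Con:
  assumes th: "\<theta> \<in> Con ar A" and cB: "countable B" and BC: "B \<subseteq> alg_carrier A"
    and clo: "\<And>f xs. length xs = ar f \<Longrightarrow> set xs \<subseteq> B \<Longrightarrow> alg_op A f xs \<in> B"
  shows "restr B \<theta> \<in> Con ar (natcopy B A)"
proof (rule ConI)
  show "restr B \<theta> \<subseteq> Nabla (natcopy B A)" unfolding restr_def Nabla_def by auto
next
  fix u assume "u \<in> alg_carrier (natcopy B A)"
  then obtain a where a: "a \<in> B" "u = to_nat_on B a" by auto
  have "(a, a) \<in> \<theta>" using Con_refl[OF th] a BC by blast
  then show "(u, u) \<in> restr B \<theta>" using mem_restr[OF cB a(1) a(1)] a by simp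
next
  fix u v assume "(u, v) \<in> restr B \<theta>"
  then obtain a b where ab: "a \<in> B" "b \<in> B" "(a, b) \<in> \<theta>" "u = to_nat_on B a" "v = to_nat_on B b"
    unfolding restr_def by auto
  have "(b, a) \<in> \<theta>" using Con_sym[OF th ab(3)] .
  then show "(v, u) \<in> restr B \<theta>" using mem_restr[OF cB ab(2) ab(1)] ab by simp
next
  fix u v w assume uv: "(u, v) \<in> restr B \<theta>" and vw: "(v, w) \<in> restr B \<theta>"
  have 1: "u \<in> to_nat_on B ` B" "v \<in> to_nat_on B ` B" "w \<in> to_nat_on B ` B"
    using restr_D[OF cB uv] restr_D[OF cB vw] by auto
  have "(from_nat_into B u, from_nat_into B v) \<in> \<theta>" "(from_nat_into B v, from_nat_into B w) \<in> \<theta>"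
    using restr_D[OF cB uv] restr_D[OF cB vw] by auto
  then have "(from_nat_into B u, from_nat_into B w) \<in> \<theta>" by (rule Con_trans[OF th])
  moreover have "from_nat_into B u \<in> B" "from_nat_into B w \<in> B" using hg[OF cB] 1 by auto
  ultimately have "(to_nat_on B (from_nat_into B u), to_nat_on B (from_nat_into B w)) \<in> restr B \<theta>"
    using mem_restr[OF cB] by blast
  then show "(u, w) \<in> restr B \<theta>" using hg[OF cB] 1 by simp
next
  fix f xs ys assume l: "length xs = ar f" "length ys = ar f"
    and r: "\<forall>i<ar f. (xs ! i, ys ! i) \<in> restr B \<theta>"
  let ?g = "from_nat_into B"
  have sx: "set xs \<subseteq> to_nat_on B ` B"
  proof
    fix u assume "u \<in> set xs"
    then obtain i where "i < length xs" "xs ! i = u" by (auto simp: in_set_conv_nth)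
    then show "u \<in> to_nat_on B ` B" using restr_D[OF cB] r l by metis
  qed
  have sy: "set ys \<subseteq> to_nat_on B ` B"
  proof
    fix u assume "u \<in> set ys"
    then obtain i where "i < length ys" "ys ! i = u" by (auto simp: in_set_conv_nth)
    then show "u \<in> to_nat_on B ` B" using restr_D[OF cB] r l by metis
  qed
  have "(alg_op A f (map ?g xs), alg_op A f (map ?g ys)) \<in> \<theta>"
  proof (rule Con_compat[OF th])
    fix i assume "i < ar f"
    then show "(map ?g xs ! i, map ?g ys ! i) \<in> \<theta>" using restr_D[OF cB] r l by simp
  qed (use l in simp_all)
  moreover have "alg_op A f (map ?g xs) \<in> B" "alg_op A f (map ?g ys) \<in> B"
    using clo map_g_in[OF cB sx] map_g_in[OF cB sy] l by simp_all
  ultimately show "(alg_op (natcopy B A) f xs, alg_op (natcopy B A) f ys) \<in> restr B \<theta>"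
    using mem_restr[OF cB] by simp
qed




lemma modular_instance:
  assumes fin: "finite (UNIV :: 'f set)" and wf: "wf_identities ar \<Sigma>"
    and cm: "congruence_modular_variety ar \<Sigma>" and var: "in_variety ar \<Sigma> (A :: ('a, 'f) alg)"
    and g1: "\<gamma>1 \<in> Con ar A" and g: "\<gamma> \<in> Con ar A" and d: "\<delta> \<in> Con ar A"
    and sub: "\<gamma>1 \<subseteq> \<gamma>" and meet: "\<gamma> \<inter> \<delta> = Delta A"
    and xy: "(x, y) \<in> \<gamma>" and xyj: "(x, y) \<in> cjoin ar A \<gamma>1 \<delta>"
  shows "(x, y) \<in> \<gamma>1"
proof -
  have alg: "is_algebra ar A" using var unfolding in_variety_def by blast
  let ?C = "alg_carrier A"
  let ?R = "\<gamma>1 \<union> \<delta>"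
  have "(x, y) \<in> ?R\<^sup>*" using cjoin_rtrancl[OF alg g1 d] xyj by blast
  moreover have RC: "?R \<subseteq> ?C \<times> ?C" using Con_sub[OF g1] Con_sub[OF d] unfolding Nabla_def by blast
  moreover have xC: "x \<in> ?C" using Con_sub[OF g] xy unfolding Nabla_def by blast
  ultimately obtain F where F: "finite F" "F \<subseteq> ?C" "x \<in> F" "y \<in> F" "(x, y) \<in> (?R \<inter> F \<times> F)\<^sup>*"
    using chain_finite[of x y ?R ?C] by blast
  define B where "B = Sg ar A F"
  have cB: "countable B" unfolding B_def using Sg_countable[OF fin countable_finite[OF F(1)]] .
  have BC: "B \<subseteq> ?C" unfolding B_def by (rule Sg_carrier[OF alg F(2)])
  have FB: "F \<subseteq> B" unfolding B_def by (auto intro: Sg.base)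
  have clo: "\<And>f xs. length xs = ar f \<Longrightarrow> set xs \<subseteq> B \<Longrightarrow> alg_op A f xs \<in> B"
    unfolding B_def by (rule Sg.opr) auto
  have Bne: "B \<noteq> {}" using FB F(3) by blast
  let ?A' = "natcopy B A"
  let ?h = "to_nat_on B"
  let ?g = "from_nat_into B"
  have var': "in_variety ar \<Sigma> ?A'" by (rule natcopy_variety[OF var wf cB BC Bne clo])
  have alg': "is_algebra ar ?A'" using var' unfolding in_variety_def by blast
  have cm': "con_modular ar ?A'" using cm var' unfolding congruence_modular_variety_def by blast
  let ?a = "restr B \<gamma>1"
  let ?b = "restr B \<delta>"
  let ?c = "restr B \<gamma>"
  have aC: "?a \<in> Con ar ?A'" by (rule restr_Con[OF g1 cB BC clo])
  have bC: "?b \<in> Con ar ?A'" by (rule restr_Con[OF d cB BC clo])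
  have cC: "?c \<in> Con ar ?A'" by (rule restr_Con[OF g cB BC clo])
  have ac: "?a \<subseteq> ?c" by (rule restr_mono[OF sub])
  define J where "J = cjoin ar ?A' ?a ?b"
  have JC: "J \<in> Con ar ?A'" unfolding J_def cjoin_def by (rule Cg_Con[OF alg'])
  have abJ: "?a \<union> ?b \<subseteq> J"
  proof -
    have "?a \<union> ?b \<subseteq> Nabla ?A'" using Con_sub[OF aC] Con_sub[OF bC] by blast
    then show ?thesis unfolding J_def cjoin_def by (rule Cg_incl)
  qed
  have "(x, c) \<in> (?R \<inter> F \<times> F)\<^sup>* \<Longrightarrow> (?h x, ?h c) \<in> J" for c
  proof (induction rule: rtrancl_induct)
    case base
    have "x \<in> B" using FB F(3) by blast
    then have "?h x \<in> alg_carrier ?A'" by simp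
    then show ?case by (rule Con_refl[OF JC])
  next
    case (step b c)
    then have bc: "b \<in> B" "c \<in> B" "(b, c) \<in> ?R" using FB by auto
    then have "(?h b, ?h c) \<in> ?a \<union> ?b" using mem_restr[OF cB bc(1) bc(2)] by blast
    then have "(?h b, ?h c) \<in> J" using abJ by blast
    then show ?case using Con_trans[OF JC step(3)] by blast
  qed
  then have j: "(?h x, ?h y) \<in> cjoin ar ?A' ?a ?b" using F(5) unfolding J_def by blast
  have xB: "x \<in> B" and yB: "y \<in> B" using FB F by auto
  have "(?h x, ?h y) \<in> ?c" using mem_restr[OF cB xB yB] xy by blast
  then have "(?h x, ?h y) \<in> cjoin ar ?A' ?a ?b \<inter> ?c" using j by blast
  also have "\<dots> = cjoin ar ?A' ?a (?b \<inter> ?c)"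
    using cm' aC bC cC ac unfolding con_modular_def by simp
  also have "\<dots> \<subseteq> ?a"
    unfolding cjoin_def
  proof (rule Cg_least[OF aC])
    show "?a \<union> (?b \<inter> ?c) \<subseteq> ?a"
    proof
      fix p assume p: "p \<in> ?a \<union> (?b \<inter> ?c)"
      obtain u v where p': "p = (u, v)" by (cases p)
      show "p \<in> ?a"
      proof (cases "p \<in> ?a")
        case False
        then have pb: "(u, v) \<in> ?b" and pc: "(u, v) \<in> ?c" using p p' by auto
        have "(?g u, ?g v) \<in> \<delta>" "(?g u, ?g v) \<in> \<gamma>" using restr_D[OF cB pb] restr_D[OF cB pc] by auto
        then have "(?g u, ?g v) \<in> Delta A" using meet by blast
        then have "?g u = ?g v" unfolding Delta_def by auto
        moreover have "u \<in> ?h ` B" "v \<in> ?h ` B" using restr_D[OF cB pb] by auto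
        ultimately have uv: "u = v" using hg[OF cB] by metis
        have "u \<in> alg_carrier ?A'" using \<open>u \<in> ?h ` B\<close> by simp
        then have "(u, u) \<in> ?a" by (rule Con_refl[OF aC])
        then show ?thesis using p' uv by simp
      qed simp
    qed
  qed
  finally have "(?h x, ?h y) \<in> ?a" .
  then show ?thesis using mem_restr[OF cB xB yB] by blast
qed

lemma BCon_K:
  assumes fin: "finite (UNIV :: 'f set)" and wf: "wf_identities ar \<Sigma>"
    and cm: "congruence_modular_variety ar \<Sigma>" and var: "in_variety ar \<Sigma> (A :: ('a, 'f) alg)"
    and NK: "Nabla A \<in> K ar A" and gB: "\<gamma> \<in> BCon ar A"
  shows "\<gamma> \<in> K ar A"
proof -
  have alg: "is_algebra ar A" using var unfolding in_variety_def by blast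
  obtain \<delta> where g: "\<gamma> \<in> Con ar A" and d: "\<delta> \<in> Con ar A" and meet: "\<gamma> \<inter> \<delta> = Delta A"
    and join: "cjoin ar A \<gamma> \<delta> = Nabla A" using gB unfolding BCon_def by blast
  define cs where "cs p = Cg ar A {p}" for p
  define S0 where "S0 = cs ` \<gamma> \<union> {\<delta>}"
  have S0C: "S0 \<subseteq> Con ar A" unfolding S0_def cs_def using Cg_Con[OF alg] d by blast
  have "\<gamma> \<union> \<delta> \<subseteq> \<Union>S0"
  proof
    fix p assume "p \<in> \<gamma> \<union> \<delta>"
    then show "p \<in> \<Union>S0"
    proof
      assume pg: "p \<in> \<gamma>"
      then have "{p} \<subseteq> Nabla A" using Con_sub[OF g] by blast
      then have "p \<in> cs p" unfolding cs_def using Cg_incl by blast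
      then show ?thesis unfolding S0_def using pg by blast
    next
      assume "p \<in> \<delta>" then show ?thesis unfolding S0_def by blast
    qed
  qed
  then have "Nabla A \<subseteq> Cg ar A (\<Union>S0)" using join unfolding cjoin_def by (metis Cg_mono)
  then obtain T where T: "finite T" "T \<subseteq> S0" "Nabla A \<subseteq> Cg ar A (\<Union>T)"
    using KD[OF NK S0C] by blast
  have "T - {\<delta>} \<subseteq> cs ` \<gamma>" "finite (T - {\<delta>})" using T unfolding S0_def by auto
  then obtain P where P: "P \<subseteq> \<gamma>" "finite P" "T - {\<delta>} = cs ` P"
    using finite_subset_image[of "T - {\<delta>}" cs \<gamma>] by blast
  define \<gamma>1 where "\<gamma>1 = Cg ar A P"
  have PN: "P \<subseteq> Nabla A" using P(1) Con_sub[OF g] by blast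
  have g1K: "\<gamma>1 \<in> K ar A" unfolding \<gamma>1_def by (rule finite_Cg_K[OF alg P(2) PN])
  have g1: "\<gamma>1 \<in> Con ar A" unfolding \<gamma>1_def by (rule Cg_Con[OF alg])
  have sub: "\<gamma>1 \<subseteq> \<gamma>" unfolding \<gamma>1_def by (rule Cg_least[OF g P(1)])
  have "\<Union>T \<subseteq> \<gamma>1 \<union> \<delta>"
  proof
    fix q assume "q \<in> \<Union>T"
    then obtain \<theta> where th: "\<theta> \<in> T" "q \<in> \<theta>" by blast
    show "q \<in> \<gamma>1 \<union> \<delta>"
    proof (cases "\<theta> = \<delta>")
      case True then show ?thesis using th by blast
    next
      case False
      then have "\<theta> \<in> cs ` P" using th P(3) by blast
      then obtain p where p: "p \<in> P" "\<theta> = cs p" by blast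
      have "cs p \<subseteq> \<gamma>1" unfolding cs_def \<gamma>1_def by (rule Cg_mono) (use p in blast)
      then show ?thesis using th p by blast
    qed
  qed
  then have "Cg ar A (\<Union>T) \<subseteq> cjoin ar A \<gamma>1 \<delta>" unfolding cjoin_def by (rule Cg_mono)
  then have N: "Nabla A \<subseteq> cjoin ar A \<gamma>1 \<delta>" using T(3) by blast
  have "\<gamma> \<subseteq> \<gamma>1"
  proof
    fix p assume pg: "p \<in> \<gamma>"
    obtain x y where p: "p = (x, y)" by (cases p)
    have "(x, y) \<in> \<gamma>" using pg p by simp
    moreover have "(x, y) \<in> cjoin ar A \<gamma>1 \<delta>" using N Con_sub[OF g] pg p by blast
    ultimately have "(x, y) \<in> \<gamma>1"
      by (rule modular_instance[OF fin wf cm var g1 g d sub meet])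
    then show "p \<in> \<gamma>1" using p by simp
  qed
  then have "\<gamma> = \<gamma>1" using sub by blast
  then show ?thesis using g1K by simp
qed




lemma lam_self: "\<theta> \<in> K ar A \<Longrightarrow> \<theta> \<in> lam ar A \<theta>"
  by (simp add: lam_def retic_rel_def)

lemma lam_mem: "\<eta> \<in> lam ar A \<theta> \<Longrightarrow> \<theta> \<in> K ar A \<and> \<eta> \<in> K ar A \<and> rho ar A \<theta> = rho ar A \<eta>"
  by (simp add: lam_def retic_rel_def)

lemma lam_eq: "\<eta> \<in> K ar A \<Longrightarrow> \<theta> \<in> K ar A \<Longrightarrow> rho ar A \<eta> = rho ar A \<theta> \<Longrightarrow> lam ar A \<eta> = lam ar A \<theta>"
  by (auto simp: lam_def retic_rel_def)

lemma spec_D: "\<phi> \<in> Spec ar A \<Longrightarrow> \<phi> \<in> Con ar A \<and> \<phi> \<noteq> Nabla A \<and>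
   (\<forall>\<alpha>\<in>Con ar A. \<forall>\<beta>\<in>Con ar A. comm ar A \<alpha> \<beta> \<subseteq> \<phi> \<longrightarrow> \<alpha> \<subseteq> \<phi> \<or> \<beta> \<subseteq> \<phi>)"
  by (simp add: Spec_def prime_con_def)

lemma rho_sub: "\<phi> \<in> Spec ar A \<Longrightarrow> \<theta> \<subseteq> \<phi> \<Longrightarrow> rho ar A \<theta> \<subseteq> \<phi>"
  unfolding rho_def by blast

lemma sub_rho: "\<theta> \<subseteq> Nabla A \<Longrightarrow> \<theta> \<subseteq> rho ar A \<theta>"
  unfolding rho_def by blast

lemma rho_Nabla: "rho ar A (Nabla A) = Nabla A"
proof -
  have "{\<phi> \<in> Spec ar A. Nabla A \<subseteq> \<phi>} = {}"
  proof (rule equals0I)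
    fix \<phi> assume "\<phi> \<in> {\<phi> \<in> Spec ar A. Nabla A \<subseteq> \<phi>}"
    then have "\<phi> \<in> Spec ar A" "Nabla A \<subseteq> \<phi>" by auto
    then show False using spec_D[of \<phi> ar A] Con_sub[of \<phi> ar A] by blast
  qed
  then show ?thesis unfolding rho_def by (simp only: Inter_empty) simp
qed

lemma V_eq_D: "V_A ar A \<theta> = Spec ar A - D_A ar A \<theta>"
  unfolding D_A_def V_A_def by blast

lemma rho_V: "rho ar A \<theta> = Nabla A \<inter> \<Inter>(V_A ar A \<theta>)"
  unfolding rho_def V_A_def by simp

theorem main:
  fixes ar :: "'f \<Rightarrow> nat"
    and \<Sigma> :: "(('f, nat) trm \<times> ('f, nat) trm) set"
    and A :: "('a, 'f) alg"
  assumes fin: "finite (UNIV :: 'f set)"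
    and wf: "wf_identities ar \<Sigma>"
    and cm: "congruence_modular_variety ar \<Sigma>"
    and "semidegenerate_variety ar \<Sigma>"
    and var: "in_variety ar \<Sigma> A"
    and cK: "\<forall>\<alpha>\<in>K ar A. \<forall>\<beta>\<in>K ar A. comm ar A \<alpha> \<beta> \<in> K ar A"
    and iso: "D_boolean_iso ar A"
  shows "preserves_boolean_center ar A"
  unfolding preserves_boolean_center_def
proof
  fix x assume "x \<in> BL ar A"
  then obtain \<alpha> \<beta> where a: "\<alpha> \<in> K ar A" and b: "\<beta> \<in> K ar A" and x: "x = lam ar A \<alpha>"
    and lc: "lam ar A (comm ar A \<alpha> \<beta>) = lam ar A (Delta A)"
    and lj: "lam ar A (cjoin ar A \<alpha> \<beta>) = lam ar A (Nabla A)"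
    unfolding BL_def by blast
  have alg: "is_algebra ar A" using var unfolding in_variety_def by blast
  have aC: "\<alpha> \<in> Con ar A" and bC: "\<beta> \<in> Con ar A" using a b by (auto intro: K_Con)
  have "comm ar A \<alpha> \<beta> \<in> K ar A" using cK a b by blast
  then have "comm ar A \<alpha> \<beta> \<in> lam ar A (Delta A)" using lc lam_self by metis
  then have rc: "rho ar A (Delta A) = rho ar A (comm ar A \<alpha> \<beta>)" using lam_mem by blast
  have "cjoin ar A \<alpha> \<beta> \<in> K ar A" by (rule cjoin_K[OF alg a b])
  then have "cjoin ar A \<alpha> \<beta> \<in> lam ar A (Nabla A)" using lj lam_self by metis
  then have NK: "Nabla A \<in> K ar A" and rj: "rho ar A (Nabla A) = rho ar A (cjoin ar A \<alpha> \<beta>)"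
    using lam_mem by blast+
  have s3: "\<alpha> \<subseteq> \<phi> \<or> \<beta> \<subseteq> \<phi>" if ph: "\<phi> \<in> Spec ar A" for \<phi>
  proof -
    have phC: "\<phi> \<in> Con ar A" using spec_D[OF ph] by blast
    have "Delta A \<subseteq> \<phi>" unfolding Delta_def using Con_refl[OF phC] by auto
    then have "rho ar A (Delta A) \<subseteq> \<phi>" by (rule rho_sub[OF ph])
    moreover have "comm ar A \<alpha> \<beta> \<subseteq> rho ar A (comm ar A \<alpha> \<beta>)"
      by (rule sub_rho) (simp add: comm_def)
    ultimately have "comm ar A \<alpha> \<beta> \<subseteq> \<phi>" using rc by simp
    then show ?thesis using spec_D[OF ph] aC bC by blast
  qed
  have s4: "\<not> (\<alpha> \<subseteq> \<phi> \<and> \<beta> \<subseteq> \<phi>)" if ph: "\<phi> \<in> Spec ar A" for \<phi>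
  proof
    assume "\<alpha> \<subseteq> \<phi> \<and> \<beta> \<subseteq> \<phi>"
    moreover have phC: "\<phi> \<in> Con ar A" using spec_D[OF ph] by blast
    ultimately have "cjoin ar A \<alpha> \<beta> \<subseteq> \<phi>" unfolding cjoin_def by (intro Cg_least) auto
    then have "rho ar A (cjoin ar A \<alpha> \<beta>) \<subseteq> \<phi>" by (rule rho_sub[OF ph])
    then have "Nabla A \<subseteq> \<phi>" using rj rho_Nabla[of ar A] by simp
    then show False using spec_D[OF ph] Con_sub[OF phC] by blast
  qed
  have Vab: "V_A ar A \<alpha> = Spec ar A - V_A ar A \<beta>"
    unfolding V_A_def using s3 s4 by blast
  have "D_A ar A \<alpha> \<in> spec_open ar A" unfolding spec_open_def using aC by blast
  moreover have "Spec ar A - D_A ar A \<alpha> = D_A ar A \<beta>"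
    unfolding D_A_def using Vab unfolding V_A_def by blast
  moreover have "D_A ar A \<beta> \<in> spec_open ar A" unfolding spec_open_def using bC by blast
  ultimately have "D_A ar A \<alpha> \<in> Clop ar A" unfolding Clop_def by simp
  moreover have "D_A ar A ` BCon ar A = Clop ar A" using iso unfolding D_boolean_iso_def bij_betw_def by blast
  ultimately obtain \<gamma> where gB: "\<gamma> \<in> BCon ar A" and Dg: "D_A ar A \<gamma> = D_A ar A \<alpha>" by (metis imageE)
  have gK: "\<gamma> \<in> K ar A" by (rule BCon_K[OF fin wf cm var NK gB])
  have "V_A ar A \<gamma> = V_A ar A \<alpha>" using Dg V_eq_D by metis
  then have "rho ar A \<gamma> = rho ar A \<alpha>" using rho_V by metis
  then have "lam ar A \<gamma> = x" using x lam_eq[OF gK a] by simp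
  then show "\<exists>\<alpha>\<in>BCon ar A. lam ar A \<alpha> = x" using gB by blast
qed


theorem theorem4p11:
  fixes ar :: "'f \<Rightarrow> nat"
    and \<Sigma> :: "(('f, nat) trm \<times> ('f, nat) trm) set"
    and A :: "('a, 'f) alg"
  assumes "finite (UNIV :: 'f set)"
    and "wf_identities ar \<Sigma>"
    and "congruence_modular_variety ar \<Sigma>"
    and "semidegenerate_variety ar \<Sigma>"
    and "in_variety ar \<Sigma> A"
    and "\<forall>\<alpha>\<in>K ar A. \<forall>\<beta>\<in>K ar A. comm ar A \<alpha> \<beta> \<in> K ar A"
    and "D_boolean_iso ar A"
  shows "preserves_boolean_center ar A"
  by (rule main[OF assms])

end
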